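(* Let $\Omega\subset\mathbb{R}^n$ be an open convex set and $u:\Omega\to\mathbb{R}$ a convex function with $\lambda\,dx\le\mu_u\le\frac1\lambda\,dx$ in $\Omega$ for some $\lambda>0$. Let $x\in\Omega$, $p\in\partial u(x)$, and $\ell(z):=u(x)+p\cdot(z-x)$. If the convex set $W:=\{z\in\Omega: u(z)=\ell(z)\}$ contains more than one point, then $W$ has no extremal points in $\Omega$.
   Context: For convex $u:\Omega\to\mathbb{R}$, $\partial u(x):=\{p: u(y)\ge u(x)+p\cdot(y-x)\ \forall y\in\Omega\}$ and $\mu_u(E):=|\bigcup_{x\in E}\partial u(x)|$ for Borel $E\subset\Omega$. Inequalities between measures are understood setwise on Borel sets. *)

theory Defs
  imports "HOL-Analysis.Analysis"
begin

definition subdiff :: "'a::euclidean_space set \<Rightarrow> ('a \<Rightarrow> real) \<Rightarrow> 'a \<Rightarrow> 'a set" where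
  "subdiff \<Omega> u x = {p. \<forall>y\<in>\<Omega>. u y \<ge> u x + p \<bullet> (y - x)}"

definition MA_measure :: "'a::euclidean_space set \<Rightarrow> ('a \<Rightarrow> real) \<Rightarrow> 'a set \<Rightarrow> ennreal" where
  "MA_measure \<Omega> u E = emeasure lebesgue (\<Union>x\<in>E. subdiff \<Omega> u x)"

end

theory Submission
  imports Defs
begin

lemma local_global_subgrad:
  fixes w :: "'a::euclidean_space \<Rightarrow> real"
  assumes cw: "convex_on \<Omega> w" and x: "x \<in> Z" and oZ: "open Z" and Zs: "Z \<subseteq> \<Omega>"
    and loc: "\<forall>z\<in>Z. w z - p \<bullet> z \<ge> w x - p \<bullet> x"
  shows "p \<in> subdiff \<Omega> w x"
  unfolding subdiff_def
proof (intro CollectI ballI)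
  fix z assume z: "z \<in> \<Omega>"
  obtain r where r: "r > 0" "ball x r \<subseteq> Z" using oZ x open_contains_ball by blast
  show "w z \<ge> w x + p \<bullet> (z - x)"
  proof (cases "z = x")
    case True then show ?thesis by simp
  next
    case False
    define t where "t = min 1 (r / (2 * norm (z - x)))"
    have nz: "norm (z - x) > 0" using False by simp
    have t0: "t > 0" "t \<le> 1" using r nz by (auto simp: t_def)
    have "norm (t *\<^sub>R (z - x)) < r"
    proof -
      have "norm (t *\<^sub>R (z - x)) = t * norm (z - x)" using t0 by simp
      also have "\<dots> \<le> (r / (2 * norm (z - x))) * norm (z - x)"
        by (intro mult_right_mono) (auto simp: t_def)
      also have "\<dots> = r/2" using nz by simp
      finally show ?thesis using r by simp
    qed
    then have "(1 - t) *\<^sub>R x + t *\<^sub>R z \<in> ball x r"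
      by (simp add: dist_norm algebra_simps norm_minus_commute)
    then have inZ: "(1 - t) *\<^sub>R x + t *\<^sub>R z \<in> Z" using r by blast
    have xO: "x \<in> \<Omega>" using x Zs by blast
    have c: "w ((1 - t) *\<^sub>R x + t *\<^sub>R z) \<le> (1 - t) * w x + t * w z"
      using convex_onD[OF cw] t0 xO z by simp
    have l: "w ((1 - t) *\<^sub>R x + t *\<^sub>R z) - p \<bullet> ((1 - t) *\<^sub>R x + t *\<^sub>R z) \<ge> w x - p \<bullet> x"
      using loc inZ by blast
    have "p \<bullet> ((1 - t) *\<^sub>R x + t *\<^sub>R z) = p \<bullet> x + t * (p \<bullet> (z - x))"
      by (simp add: inner_simps algebra_simps)
    with c l have "t * (w x + p \<bullet> (z - x)) \<le> t * w z" by (simp add: algebra_simps)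
    then show ?thesis using t0 by simp
  qed
qed

lemma cone_subgrad:
  fixes w :: "'a::euclidean_space \<Rightarrow> real"
  assumes oO: "open \<Omega>" and cw: "convex_on \<Omega> w" and Zs: "closure Z \<subseteq> \<Omega>" and oZ: "open Z"
    and bZ: "bounded Z" and out: "\<forall>z\<in>\<Omega> - Z. w z \<ge> 0" and y: "y \<in> Z"
    and p: "\<forall>z\<in>closure Z. p \<bullet> (z - y) < - w y"
  shows "\<exists>x\<in>Z. p \<in> subdiff \<Omega> w x"
proof -
  define G where "G x = w x - p \<bullet> x" for x
  have cont: "continuous_on \<Omega> w" using convex_on_continuous[OF oO cw] .
  have "continuous_on (closure Z) G" unfolding G_def
    by (intro continuous_intros continuous_on_subset[OF cont Zs])
  moreover have "compact (closure Z)" using bZ by simp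
  moreover have "closure Z \<noteq> {}" using y closure_subset by blast
  ultimately obtain xs where xs: "xs \<in> closure Z" "\<forall>z\<in>closure Z. G xs \<le> G z"
    using continuous_attains_inf by blast
  have yc: "y \<in> closure Z" using y closure_subset by blast
  have "xs \<in> Z"
  proof (rule ccontr)
    assume "xs \<notin> Z"
    then have "w xs \<ge> 0" using out xs Zs by blast
    moreover have "p \<bullet> (xs - y) < - w y" using p xs by blast
    moreover have "G xs \<le> G y" using xs yc by blast
    ultimately show False by (simp add: G_def inner_diff_right)
  qed
  moreover have "p \<in> subdiff \<Omega> w xs"
    apply (rule local_global_subgrad[OF cw \<open>xs \<in> Z\<close> oZ])
    using Zs closure_subset apply blast
    using xs closure_subset unfolding G_def by blast
  ultimately show ?thesis by blast
qed

lemma core: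
  fixes w :: "'a::euclidean_space \<Rightarrow> real"
  assumes oO: "open \<Omega>" and cw: "convex_on \<Omega> w" and Zs: "closure Z \<subseteq> \<Omega>" and oZ: "open Z"
    and bZ: "bounded Z" and cZ: "convex Z" and neg: "\<forall>z\<in>Z. w z < 0" and out: "\<forall>z\<in>\<Omega> - Z. w z \<ge> 0"
    and y: "y \<in> Z" and x0: "x0 \<in> Z" and y2: "x0 - (1/2) *\<^sub>R (y - x0) \<in> Z"
    and v: "v \<bullet> (y - x0) = 1" and tau: "\<forall>z\<in>Z. v \<bullet> (z - y) \<le> \<tau>"
    and Mm: "\<forall>z\<in>Z. w z \<ge> - Mm"
    and lam: "lam > 0"
    and MA: "\<And>E. E \<in> sets borel \<Longrightarrow> E \<subseteq> \<Omega> \<Longrightarrow>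
           ennreal lam * emeasure lebesgue E \<le> MA_measure \<Omega> w E
         \<and> MA_measure \<Omega> w E \<le> ennreal (1 / lam) * emeasure lebesgue E"
    and N: "4 * real (N - 1) * \<tau> < 3"
  shows "real N * ((- w y)/6) ^ DIM('a) \<le> (4 * Mm) ^ DIM('a) / lam^2"
proof -
  define \<omega> where "\<omega> = - w y"
  define a where "a = \<omega> / 6"
  have om: "\<omega> > 0" using neg y by (simp add: \<omega>_def)
  have a0: "a > 0" using om by (simp add: a_def)
  have Mm0: "Mm > 0" using Mm neg y by force
  define Q where "Q = {q. \<forall>z\<in>Z. q \<bullet> (z - x0) \<le> 1}"
  have Qcl: "closed Q"
  proof -
    have "Q = (\<Inter>z\<in>Z. {q. (z - x0) \<bullet> q \<le> 1})" by (auto simp: Q_def inner_commute)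
    then show ?thesis by (auto intro!: closed_Inter closed_halfspace_le)
  qed
  obtain d1 where d1: "d1 > 0" "ball x0 d1 \<subseteq> Z" using oZ x0 open_contains_ball by blast
  have Qbd: "Q \<subseteq> cball 0 (2 / d1)"
  proof
    fix q assume q: "q \<in> Q"
    show "q \<in> cball 0 (2/d1)"
    proof (cases "q = 0")
      case True then show ?thesis using d1 by simp
    next
      case False
      define z where "z = x0 + (d1 / 2 / norm q) *\<^sub>R q"
      have "dist x0 z = d1/2" using False d1 by (simp add: z_def dist_norm)
      then have "z \<in> Z" using d1 by auto
      then have "q \<bullet> (z - x0) \<le> 1" using q by (auto simp: Q_def)
      moreover have "q \<bullet> (z - x0) = d1 / 2 * norm q"
        using False by (simp add: z_def inner_commute power2_norm_eq_inner[symmetric] power2_eq_square)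
      ultimately have "norm q \<le> 2 / d1" using d1 by (simp add: field_simps)
      then show ?thesis by simp
    qed
  qed
  obtain R x1 where R: "Z \<subseteq> cball x1 R" "0 \<le> R" using bZ bounded_subset_cball by blast
  have ballQ: "cball 0 (1 / (2*R + 1)) \<subseteq> Q"
  proof
    fix q :: 'a assume q: "q \<in> cball 0 (1 / (2*R + 1))"
    show "q \<in> Q" unfolding Q_def
    proof (intro CollectI ballI)
      fix z assume z: "z \<in> Z"
      have "norm (z - x0) \<le> 2 * R"
      proof -
        have "dist x1 z \<le> R" "dist x1 x0 \<le> R" using R z x0 by auto
        then show ?thesis by (metis dist_norm dist_triangle2 mult_2 order_trans add_mono dist_commute)
      qed
      have "q \<bullet> (z - x0) \<le> norm q * norm (z - x0)" by (rule norm_cauchy_schwarz)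
      also have "\<dots> \<le> (1 / (2*R + 1)) * (2 * R + 1)"
        using q R \<open>norm (z - x0) \<le> 2 * R\<close> by (intro mult_mono) auto
      also have "\<dots> = 1" using R by simp
      finally show "q \<bullet> (z - x0) \<le> 1" .
    qed
  qed
  have Qm: "Q \<in> lmeasurable"
    using Qcl Qbd by (intro bounded_set_imp_lmeasurable) (auto intro: bounded_subset borel_closed)
  have muQ: "measure lebesgue Q > 0"
  proof -
    have "0 < measure lebesgue (ball (0::'a) (1 / (2*R + 1)))"
      using R content_ball_pos[of "1 / (2*R + 1)" "0::'a"] by simp
    also have "\<dots> \<le> measure lebesgue Q"
      using ballQ Qm by (intro measure_mono_fmeasurable) auto
    finally show ?thesis .
  qed
  have Zm: "Z \<in> lmeasurable" using bZ oZ by (intro bounded_set_imp_lmeasurable) auto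
  have muZ: "measure lebesgue Z > 0"
  proof -
    have "0 < measure lebesgue (ball x0 d1)"
      using d1 content_ball_pos[of d1 x0] by simp
    also have "\<dots> \<le> measure lebesgue Z"
      using d1 Zm by (intro measure_mono_fmeasurable) auto
    finally show ?thesis .
  qed
  have emZ: "emeasure lebesgue Z = ennreal (measure lebesgue Z)" using Zm by (simp add: emeasure_eq_measure2)
  have emQ: "emeasure lebesgue Q = ennreal (measure lebesgue Q)" using Qm by (simp add: emeasure_eq_measure2)
  have ZO: "Z \<subseteq> \<Omega>" using Zs closure_subset by blast
  define SZ where "SZ = (\<Union>x\<in>Z. subdiff \<Omega> w x)"
  have MAZ: "ennreal lam * ennreal (measure lebesgue Z) \<le> emeasure lebesgue SZ"
     "emeasure lebesgue SZ \<le> ennreal (1 / lam) * ennreal (measure lebesgue Z)"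
    using MA[of Z] oZ ZO emZ by (auto simp: MA_measure_def SZ_def)
  have SZm: "SZ \<in> sets lebesgue"
  proof (rule ccontr)
    assume "SZ \<notin> sets lebesgue"
    then have "emeasure lebesgue SZ = 0" by (rule emeasure_notin_sets)
    with MAZ(1) have "ennreal (lam * measure lebesgue Z) \<le> 0" using lam by (simp add: ennreal_mult)
    then have "lam * measure lebesgue Z \<le> 0" using lam muZ by (simp add: ennreal_le_iff2 ennreal_eq_0_iff)
    then show False using mult_pos_pos[OF lam muZ] by linarith
  qed
  have tau0: "\<tau> \<ge> 0" using tau y by force
  have clhalf: "closure Z \<subseteq> {z. c \<bullet> z \<le> b}" if "\<forall>z\<in>Z. c \<bullet> z \<le> b" for c b
    using that by (intro closure_minimal closed_halfspace_le) auto
  have qy: "q \<bullet> (y - x0) \<ge> -2" "q \<bullet> (y - x0) \<le> 1" if "q \<in> Q" for q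
  proof -
    have "q \<bullet> ((x0 - (1/2) *\<^sub>R (y - x0)) - x0) \<le> 1" using that y2 by (auto simp: Q_def)
    then show "q \<bullet> (y - x0) \<ge> -2" by (simp add: inner_simps)
    show "q \<bullet> (y - x0) \<le> 1" using that y by (auto simp: Q_def)
  qed
  define A where "A k = (\<lambda>q. a *\<^sub>R q + (4*a*real k) *\<^sub>R v) ` Q" for k :: nat
  have Asub: "A k \<subseteq> SZ" if k: "k < N" for k
  proof
    fix p assume "p \<in> A k"
    then obtain q where q: "q \<in> Q" and p: "p = a *\<^sub>R q + (4*a*real k) *\<^sub>R v" by (auto simp: A_def)
    have "\<forall>z\<in>closure Z. p \<bullet> (z - y) < - w y"
    proof
      fix z assume z: "z \<in> closure Z"
      have h1: "q \<bullet> z \<le> 1 + q \<bullet> x0"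
      proof -
        have "\<forall>z\<in>Z. q \<bullet> z \<le> 1 + q \<bullet> x0" using q by (auto simp: Q_def inner_simps)
        then show ?thesis using clhalf[of q "1 + q \<bullet> x0"] z by blast
      qed
      have h2: "v \<bullet> z \<le> \<tau> + v \<bullet> y"
      proof -
        have "\<forall>z\<in>Z. v \<bullet> z \<le> \<tau> + v \<bullet> y" using tau by (auto simp: inner_simps)
        then show ?thesis using clhalf[of v "\<tau> + v \<bullet> y"] z by blast
      qed
      have "p \<bullet> (z - y) = a * (q \<bullet> z - q \<bullet> x0) - a * (q \<bullet> (y - x0)) + (4*a*real k) * (v \<bullet> z - v \<bullet> y)"
        by (simp add: p inner_simps algebra_simps)
      also have "\<dots> \<le> a * 1 + a * 2 + (4*a*real k) * \<tau>"
      proof -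
        have t1: "a * (q \<bullet> z - q \<bullet> x0) \<le> a * 1" using h1 a0 by (intro mult_left_mono) auto
        have t2: "a * (-(q \<bullet> (y - x0))) \<le> a * 2" using qy[OF q] a0 by (intro mult_left_mono) auto
        have t3: "(4*a*real k) * (v \<bullet> z - v \<bullet> y) \<le> (4*a*real k) * \<tau>" using h2 a0 by (intro mult_left_mono) auto
        show ?thesis using t1 t2 t3 by (simp add: algebra_simps)
      qed
      also have "\<dots> < 6 * a"
      proof -
        have "real k \<le> real (N - 1)" using k by simp
        then have "4 * real k * \<tau> \<le> 4 * real (N - 1) * \<tau>" using tau0 by (simp add: mult_right_mono)
        then have "4 * real k * \<tau> < 3" using N by linarith
        then have "a * (4 * real k * \<tau>) < a * 3" using a0 by simp
        then show ?thesis by (simp add: algebra_simps)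
      qed
      finally show "p \<bullet> (z - y) < - w y" by (simp add: a_def \<omega>_def)
    qed
    then show "p \<in> SZ" using cone_subgrad[OF oO cw Zs oZ bZ out y] by (auto simp: SZ_def)
  qed
  have Adisj: "disjoint_family_on A {..<N}"
  proof (unfold disjoint_family_on_def, intro ballI impI)
    fix k k' assume "k \<in> {..<N}" "k' \<in> {..<N}" "k \<noteq> k'"
    show "A k \<inter> A k' = {}"
    proof (rule ccontr)
      assume "A k \<inter> A k' \<noteq> {}"
      then obtain q q' where q: "q \<in> Q" "q' \<in> Q"
        and e: "a *\<^sub>R q + (4*a*real k) *\<^sub>R v = a *\<^sub>R q' + (4*a*real k') *\<^sub>R v"
        by (auto simp: A_def)
      have "(a *\<^sub>R q + (4*a*real k) *\<^sub>R v) \<bullet> (y - x0) = (a *\<^sub>R q' + (4*a*real k') *\<^sub>R v) \<bullet> (y - x0)"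
        using e by simp
      then have "a * (q \<bullet> (y - x0)) + 4*a*real k = a * (q' \<bullet> (y - x0)) + 4*a*real k'"
        using v by (simp only: inner_add_left inner_scaleR_left v mult_1_right)
      then have "4 * real k + q \<bullet> (y - x0) = 4 * real k' + q' \<bullet> (y - x0)"
        using a0 by (simp add: algebra_simps) (metis (no_types) distrib_left mult.assoc mult_cancel_left a0 less_irrefl)
      moreover have "real k + 1 \<le> real k' \<or> real k' + 1 \<le> real k" using \<open>k \<noteq> k'\<close> by linarith
      ultimately show False using qy[OF q(1)] qy[OF q(2)] by linarith
    qed
  qed
  have Acl: "A k \<in> sets lebesgue" for k
  proof -
    have "A k = (+) ((4*a*real k) *\<^sub>R v) ` ((\<lambda>q. a *\<^sub>R q) ` Q)"
      by (auto simp: A_def image_image add.commute)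
    then have "closed (A k)" using Qcl by (simp add: closed_translation closed_scaling)
    then show ?thesis by auto
  qed
  have emA: "emeasure lebesgue (A k) = ennreal (a ^ DIM('a) * measure lebesgue Q)" for k
    using emeasure_lebesgue_affine[of a "(4*a*real k) *\<^sub>R v" Q] a0 emQ
    by (simp add: A_def ennreal_mult)
  have "emeasure lebesgue (\<Union>k\<in>{..<N}. A k) = (\<Sum>k\<in>{..<N}. emeasure lebesgue (A k))"
    using Acl Adisj by (intro sum_emeasure[symmetric]) auto
  also have "\<dots> = ennreal (real N * (a ^ DIM('a) * measure lebesgue Q))"
    using a0 muQ by (simp add: emA ennreal_of_nat_eq_real_of_nat ennreal_mult)
  finally have emU: "emeasure lebesgue (\<Union>k\<in>{..<N}. A k) = ennreal (real N * (a ^ DIM('a) * measure lebesgue Q))" .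
  have "emeasure lebesgue (\<Union>k\<in>{..<N}. A k) \<le> emeasure lebesgue SZ"
    using Asub SZm by (intro emeasure_mono) auto
  then have "ennreal (real N * (a ^ DIM('a) * measure lebesgue Q)) \<le> ennreal (1 / lam) * ennreal (measure lebesgue Z)"
    using MAZ(2) emU by simp
  also have "\<dots> = ennreal (1 / lam * measure lebesgue Z)" using lam by (simp add: ennreal_mult[symmetric] del: ennreal_mult')
  finally have stack: "real N * (a ^ DIM('a) * measure lebesgue Q) \<le> measure lebesgue Z / lam"
    using lam muZ by (subst (asm) ennreal_le_iff) auto
  define E where "E = (\<lambda>x. (1/2) *\<^sub>R x0 + (1/2::real) *\<^sub>R x) ` Z"
  have Eo: "open E" unfolding E_def using oZ by (intro open_affinity) auto
  have EZ: "E \<subseteq> Z"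
  proof
    fix e assume "e \<in> E"
    then obtain x where x: "x \<in> Z" "e = (1/2) *\<^sub>R x0 + (1/2::real) *\<^sub>R x" by (auto simp: E_def)
    show "e \<in> Z" using convexD[OF cZ x0 x(1), of "1/2" "1/2"] x by simp
  qed
  have emE: "emeasure lebesgue E = ennreal ((1/2) ^ DIM('a) * measure lebesgue Z)"
  proof -
    have "E = (\<lambda>x. (1/2::real) *\<^sub>R x + (1/2) *\<^sub>R x0) ` Z" by (simp add: E_def add.commute)
    then show ?thesis using emeasure_lebesgue_affine[of "1/2" "(1/2) *\<^sub>R x0" Z] emZ
      by (simp add: ennreal_mult[symmetric] power_divide del: ennreal_mult')
  qed
  define SE where "SE = (\<Union>x\<in>E. subdiff \<Omega> w x)"
  have MAE: "ennreal lam * ennreal ((1/2) ^ DIM('a) * measure lebesgue Z) \<le> emeasure lebesgue SE"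
    using MA[of E] Eo EZ ZO emE by (auto simp: MA_measure_def SE_def)
  have posE: "lam * ((1/2) ^ DIM('a) * measure lebesgue Z) > 0" using lam muZ by simp
  have SEm: "SE \<in> sets lebesgue"
  proof (rule ccontr)
    assume "SE \<notin> sets lebesgue"
    then have "emeasure lebesgue SE = 0" by (rule emeasure_notin_sets)
    with MAE have "ennreal (lam * ((1/2) ^ DIM('a) * measure lebesgue Z)) \<le> 0"
      using lam by (simp add: ennreal_mult)
    then have "lam * ((1/2) ^ DIM('a) * measure lebesgue Z) \<le> 0" using posE by (simp add: ennreal_le_iff2 ennreal_eq_0_iff)
    then show False using posE by linarith
  qed
  define B where "B = (\<lambda>q. (2*Mm) *\<^sub>R q + 0) ` Q"
  have SEB: "SE \<subseteq> B"
  proof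
    fix p assume "p \<in> SE"
    then obtain e where e: "e \<in> E" "p \<in> subdiff \<Omega> w e" by (auto simp: SE_def)
    then obtain x' where x': "x' \<in> Z" "e = (1/2) *\<^sub>R x0 + (1/2::real) *\<^sub>R x'" by (auto simp: E_def)
    have eZ: "e \<in> Z" using EZ e by blast
    have "(1 / (2*Mm)) *\<^sub>R p \<in> Q" unfolding Q_def
    proof (intro CollectI ballI)
      fix z assume z: "z \<in> Z"
      define z' where "z' = (1/2) *\<^sub>R x' + (1/2::real) *\<^sub>R z"
      have z'Z: "z' \<in> Z" using convexD[OF cZ x'(1) z, of "1/2" "1/2"] by (simp add: z'_def)
      have "w z' \<ge> w e + p \<bullet> (z' - e)" using e(2) z'Z ZO by (auto simp: subdiff_def)
      moreover have "z' - e = (1/2::real) *\<^sub>R (z - x0)" by (simp add: z'_def x'(2) algebra_simps)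
      moreover have "w z' < 0" using neg z'Z by blast
      moreover have "w e \<ge> - Mm" using Mm eZ by blast
      ultimately have "p \<bullet> (z - x0) < 2 * Mm" by (simp add: inner_simps field_simps)
      then show "(1 / (2*Mm)) *\<^sub>R p \<bullet> (z - x0) \<le> 1" using Mm0 by (simp add: field_simps)
    qed
    moreover have "p = (2*Mm) *\<^sub>R ((1 / (2*Mm)) *\<^sub>R p) + 0" using Mm0 by simp
    ultimately show "p \<in> B" unfolding B_def by blast
  qed
  have Bm: "B \<in> sets lebesgue"
  proof -
    have "closed B" unfolding B_def using Qcl closed_scaling[OF Qcl, of "2*Mm"] by simp
    then show ?thesis by auto
  qed
  have emB: "emeasure lebesgue B = ennreal ((2*Mm) ^ DIM('a) * measure lebesgue Q)"
    unfolding B_def using emeasure_lebesgue_affine[of "2*Mm" 0 Q] Mm0 emQ by (simp add: ennreal_mult)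
  have "ennreal (lam * ((1/2) ^ DIM('a) * measure lebesgue Z)) \<le> emeasure lebesgue SE"
    using MAE lam by (simp add: ennreal_mult)
  also have "\<dots> \<le> emeasure lebesgue B" using SEB Bm by (rule emeasure_mono)
  finally have "ennreal (lam * ((1/2) ^ DIM('a) * measure lebesgue Z)) \<le> ennreal ((2*Mm) ^ DIM('a) * measure lebesgue Q)"
    using emB by simp
  then have lower: "lam * ((1/2) ^ DIM('a) * measure lebesgue Z) \<le> (2*Mm) ^ DIM('a) * measure lebesgue Q"
    using Mm0 muQ by (subst (asm) ennreal_le_iff) auto
  have Zle: "measure lebesgue Z \<le> 2 ^ DIM('a) * (2*Mm) ^ DIM('a) * measure lebesgue Q / lam"
    using lower lam by (simp add: field_simps power_divide)
  have "real N * a ^ DIM('a) * measure lebesgue Q \<le> (4*Mm) ^ DIM('a) / lam^2 * measure lebesgue Q"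
  proof -
    have "real N * a ^ DIM('a) * measure lebesgue Q \<le> measure lebesgue Z / lam" using stack by (simp add: mult.assoc)
    also have "\<dots> \<le> (2 ^ DIM('a) * (2*Mm) ^ DIM('a) * measure lebesgue Q / lam) / lam"
      using Zle lam by (intro divide_right_mono) auto
    also have "\<dots> = (4*Mm) ^ DIM('a) / lam^2 * measure lebesgue Q"
    proof -
      have "(2::real) ^ DIM('a) * 2 ^ DIM('a) = 4 ^ DIM('a)" by (simp add: power_mult_distrib[symmetric])
      then show ?thesis by (simp add: power_mult_distrib power2_eq_square field_simps)
    qed
    finally show ?thesis .
  qed
  then have "real N * a ^ DIM('a) \<le> (4*Mm) ^ DIM('a) / lam^2" using muQ
    by (metis mult_le_cancel_right_pos)
  then show ?thesis by (simp add: a_def \<omega>_def)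
qed

lemma convex_on_shift:
  fixes u :: "'a::euclidean_space \<Rightarrow> real"
  assumes "convex_on S u"
  shows "convex_on S (\<lambda>z. u z + c + q \<bullet> z)"
proof -
  have cS: "convex S" using assms by (simp add: convex_on_def)
  show ?thesis unfolding convex_on_def
  proof (intro conjI cS ballI allI impI)
    fix x y and s t :: real assume xy: "x \<in> S" "y \<in> S" and st: "0 \<le> s" "0 \<le> t" "s + t = 1"
    have "u (s *\<^sub>R x + t *\<^sub>R y) \<le> s * u x + t * u y"
      using assms xy st by (auto simp: convex_on_def)
    moreover have "s * c + t * c = c" using st by (metis distrib_right mult_1)
    ultimately show "u (s *\<^sub>R x + t *\<^sub>R y) + c + q \<bullet> (s *\<^sub>R x + t *\<^sub>R y)
         \<le> s * (u x + c + q \<bullet> x) + t * (u y + c + q \<bullet> y)"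
      by (simp add: inner_simps algebra_simps)
  qed
qed

lemma MA_shift:
  fixes u :: "'a::euclidean_space \<Rightarrow> real"
  shows "MA_measure \<Omega> (\<lambda>z. u z + c + q \<bullet> z) E = MA_measure \<Omega> u E"
proof -
  have "subdiff \<Omega> (\<lambda>z. u z + c + q \<bullet> z) x = (\<lambda>r. 1 *\<^sub>R r + q) ` subdiff \<Omega> u x" for x
  proof (rule set_eqI)
    fix r
    have "r \<in> subdiff \<Omega> (\<lambda>z. u z + c + q \<bullet> z) x \<longleftrightarrow> r - q \<in> subdiff \<Omega> u x"
      by (simp add: subdiff_def inner_simps algebra_simps)
    also have "\<dots> \<longleftrightarrow> r \<in> (\<lambda>r. 1 *\<^sub>R r + q) ` subdiff \<Omega> u x"
      by (auto simp: image_iff) (metis add_diff_cancel diff_add_cancel)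
    finally show "r \<in> subdiff \<Omega> (\<lambda>z. u z + c + q \<bullet> z) x \<longleftrightarrow> r \<in> (\<lambda>r. 1 *\<^sub>R r + q) ` subdiff \<Omega> u x" .
  qed
  then have "(\<Union>x\<in>E. subdiff \<Omega> (\<lambda>z. u z + c + q \<bullet> z) x) = (\<lambda>r. 1 *\<^sub>R r + q) ` (\<Union>x\<in>E. subdiff \<Omega> u x)"
    by (simp add: image_UN)
  then show ?thesis unfolding MA_measure_def
    using emeasure_lebesgue_affine[of 1 "q" "\<Union>x\<in>E. subdiff \<Omega> u x"] by simp
qed

lemma compact_eps:
  fixes g h :: "'a::euclidean_space \<Rightarrow> real"
  assumes "compact F" "continuous_on F g" "continuous_on F h" "\<forall>z\<in>F. g z > 0"
  shows "\<exists>\<epsilon>>0. \<forall>z\<in>F. \<epsilon> * h z < g z"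
proof (cases "F = {}")
  case True then show ?thesis by (intro exI[of _ 1]) auto
next
  case False
  obtain z1 where z1: "z1 \<in> F" "\<forall>z\<in>F. g z1 \<le> g z" using continuous_attains_inf[OF assms(1) False assms(2)] by blast
  obtain z2 where z2: "z2 \<in> F" "\<forall>z\<in>F. h z \<le> h z2" using continuous_attains_sup[OF assms(1) False assms(3)] by blast
  define \<epsilon> where "\<epsilon> = g z1 / (\<bar>h z2\<bar> + 1)"
  have g1: "g z1 > 0" using assms(4) z1 by blast
  have e0: "\<epsilon> > 0" using g1 by (simp add: \<epsilon>_def)
  have "\<epsilon> * h z < g z" if z: "z \<in> F" for z
  proof -
    have "\<epsilon> * h z \<le> \<epsilon> * \<bar>h z2\<bar>" using z2 z e0 by (intro mult_left_mono) auto
    also have "\<dots> < \<epsilon> * (\<bar>h z2\<bar> + 1)" using e0 by simp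
    also have "\<dots> = g z1" by (simp add: \<epsilon>_def)
    also have "\<dots> \<le> g z" using z1 z by blast
    finally show ?thesis .
  qed
  then show ?thesis using e0 by blast
qed

theorem proposition3p11:
  fixes \<Omega> :: "'a::euclidean_space set" and u :: "'a \<Rightarrow> real"
    and lam :: real and x p :: 'a and W :: "'a set"
  assumes "open \<Omega>" and "convex \<Omega>"
    and "convex_on \<Omega> u"
    and "lam > 0"
    and "\<And>E. E \<in> sets borel \<Longrightarrow> E \<subseteq> \<Omega> \<Longrightarrow>
           ennreal lam * emeasure lebesgue E \<le> MA_measure \<Omega> u E
         \<and> MA_measure \<Omega> u E \<le> ennreal (1 / lam) * emeasure lebesgue E"
    and "x \<in> \<Omega>" and "p \<in> subdiff \<Omega> u x"
    and "W = {z\<in>\<Omega>. u z = u x + p \<bullet> (z - x)}"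
    and "\<exists>a\<in>W. \<exists>b\<in>W. a \<noteq> b"
  shows "\<not> (\<exists>z\<in>\<Omega>. z extreme_point_of W)"
proof
  note oO = assms(1) and cO = assms(2) and cu = assms(3) and lam = assms(4) and MAu = assms(5)
  assume "\<exists>z\<in>\<Omega>. z extreme_point_of W"
  then obtain z0 where z0O: "z0 \<in> \<Omega>" and ext: "z0 extreme_point_of W" by blast
  define g where "g z = u z + (- u x + p \<bullet> x) + (- p) \<bullet> z" for z
  have gW: "W = {z\<in>\<Omega>. g z = 0}"
    using assms(8) by (auto simp: g_def inner_simps algebra_simps)
  have g0: "g z \<ge> 0" if "z \<in> \<Omega>" for z
    using assms(7) that by (auto simp: subdiff_def g_def inner_simps algebra_simps)
  have cg: "convex_on \<Omega> g" unfolding g_def[abs_def] by (rule convex_on_shift[OF cu])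
  have contg: "continuous_on \<Omega> g" using convex_on_continuous[OF oO cg] .
  have cW: "convex W"
    unfolding convex_alt gW
  proof (intro ballI allI impI CollectI conjI)
    fix a b and t :: real assume a: "a \<in> {z\<in>\<Omega>. g z = 0}" and b: "b \<in> {z\<in>\<Omega>. g z = 0}" and t: "0 \<le> t \<and> t \<le> 1"
    show inO: "(1 - t) *\<^sub>R a + t *\<^sub>R b \<in> \<Omega>" using a b t cO by (auto simp: convex_alt)
    have "g ((1 - t) *\<^sub>R a + t *\<^sub>R b) \<le> (1 - t) * g a + t * g b"
      using convex_onD[OF cg, of t a b] a b t by auto
    then show "g ((1 - t) *\<^sub>R a + t *\<^sub>R b) = 0" using a b g0[OF inO] by simp
  qed
  have z0W: "z0 \<in> W" using ext by (simp add: extreme_point_of_def)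
  obtain b where bW: "b \<in> W" and bz0: "b \<noteq> z0" using assms(9) by blast
  obtain r0 where r0: "r0 > 0" "cball z0 r0 \<subseteq> \<Omega>" using oO z0O open_contains_cball by blast
  define \<rho> where "\<rho> = min r0 (dist z0 b)"
  have rho: "\<rho> > 0" "cball z0 \<rho> \<subseteq> \<Omega>" "\<rho> \<le> dist z0 b"
    using r0 bz0 by (auto simp: \<rho>_def)
  define S where "S = {z \<in> cball z0 \<rho>. g z = 0} - ball z0 (\<rho>/2)"
  have Scomp: "compact S"
  proof -
    have "closed {z \<in> cball z0 \<rho>. g z = 0}"
      using continuous_on_subset[OF contg rho(2)] by (intro continuous_closed_preimage_constant) auto
    then have "closed S" unfolding S_def by (intro closed_Diff) auto
    moreover have "bounded S" unfolding S_def by (rule bounded_subset[of "cball z0 \<rho>"]) auto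
    ultimately show ?thesis by (simp add: compact_eq_bounded_closed)
  qed
  have SW: "S \<subseteq> W" using rho(2) by (auto simp: S_def gW)
  have z0notin: "z0 \<notin> convex hull S"
  proof
    assume z0S: "z0 \<in> convex hull S"
    have "convex hull S \<subseteq> W" using SW cW by (intro hull_minimal) auto
    then have "z0 extreme_point_of (convex hull S)" using ext z0S unfolding extreme_point_of_def by blast
    then have "z0 \<in> S" by (rule extreme_point_of_convex_hull)
    then show False using rho by (simp add: S_def)
  qed
  obtain a0 b0 where ab: "a0 \<bullet> z0 < b0" "\<forall>x\<in>convex hull S. a0 \<bullet> x > b0"
    using separating_hyperplane_closed_point[OF convex_convex_hull compact_imp_closed[OF compact_convex_hull[OF Scomp]] z0notin]
    by blast
  define e where "e = - a0"
  define \<alpha> where "\<alpha> = - b0"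
  define h where "h z = e \<bullet> z - \<alpha>" for z
  have hz0: "h z0 > 0" using ab(1) by (simp add: h_def e_def \<alpha>_def)
  have hS: "h z < 0" if "z \<in> S" for z
    using ab(2) hull_subset[of S convex] that by (force simp: h_def e_def \<alpha>_def)
  have hcomb: "h ((1 - t) *\<^sub>R a + t *\<^sub>R c) = (1 - t) * h a + t * h c" for t a c
    by (simp add: h_def inner_simps algebra_simps)
  have cap: "dist z0 z < \<rho>/2" if z: "z \<in> W" "h z \<ge> 0" for z
  proof (rule ccontr)
    assume far: "\<not> dist z0 z < \<rho>/2"
    show False
    proof (cases "dist z0 z \<le> \<rho>")
      case True
      then have "z \<in> S" using z far by (auto simp: S_def gW)
      then show False using hS z by force
    next
      case False
      define t where "t = \<rho> / dist z0 z"
      have dpos: "dist z0 z > 0" using False rho by linarith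
      have t: "0 < t" "t < 1" using False rho dpos by (auto simp: t_def divide_less_eq)
      define z' where "z' = (1 - t) *\<^sub>R z0 + t *\<^sub>R z"
      have "z' \<in> W" using cW z0W z t unfolding z'_def convex_alt by auto
      moreover have "dist z0 z' = \<rho>"
      proof -
        have "z0 - z' = t *\<^sub>R (z0 - z)" by (simp add: z'_def algebra_simps)
        then have "dist z0 z' = t * dist z0 z" using t by (simp add: dist_norm)
        then show ?thesis using dpos by (simp add: t_def)
      qed
      ultimately have "z' \<in> S" using rho by (auto simp: S_def gW)
      moreover have "h z' > 0"
      proof -
        have "(1 - t) * h z0 > 0" using t hz0 by simp
        moreover have "t * h z \<ge> 0" using t z by simp
        ultimately show ?thesis by (simp add: z'_def hcomb)
      qed
      ultimately show False using hS by force
    qed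
  qed
  have hcont: "continuous_on T h" for T unfolding h_def by (intro continuous_intros)
  define C where "C = {z \<in> cball z0 (\<rho>/2). g z = 0 \<and> h z \<ge> 0}"
  have Ccomp: "compact C"
  proof -
    have cb: "cball z0 (\<rho>/2) \<subseteq> \<Omega>" using rho by (intro order_trans[OF _ rho(2)]) auto
    have "C = {z \<in> cball z0 (\<rho>/2). g z = 0} \<inter> {z. e \<bullet> z \<ge> \<alpha>}" by (auto simp: C_def h_def)
    moreover have "closed {z \<in> cball z0 (\<rho>/2). g z = 0}"
      using continuous_on_subset[OF contg cb] by (intro continuous_closed_preimage_constant) auto
    ultimately have "closed C" by (auto intro: closed_Int closed_halfspace_ge)
    moreover have "bounded C" unfolding C_def by (rule bounded_subset[of "cball z0 (\<rho>/2)"]) auto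
    ultimately show ?thesis by (simp add: compact_eq_bounded_closed)
  qed
  have z0C: "z0 \<in> C" using z0W hz0 rho by (auto simp: C_def gW)
  obtain y where yC: "y \<in> C" and ymax: "\<forall>z\<in>C. h z \<le> h y"
    using continuous_attains_sup[OF Ccomp _ hcont] z0C by blast
  define H where "H = h y"
  have Hpos: "H > 0" using ymax z0C hz0 by (force simp: H_def)
  have yW: "y \<in> W" using yC rho by (auto simp: C_def gW)
  have hmax: "h z \<le> H" if "z \<in> W" "h z \<ge> 0" for z
  proof -
    have "z \<in> C" using that cap[OF that] gW by (auto simp: C_def dist_commute)
    then show ?thesis using ymax by (simp add: H_def)
  qed
  have hb: "h b < 0"
  proof (rule ccontr)
    assume "\<not> h b < 0"
    then have "dist z0 b < \<rho>/2" using cap bW by force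
    then show False using rho by linarith
  qed
  define t where "t = H / (H - h b)"
  have t: "0 < t" "t < 1" using Hpos hb by (auto simp: t_def divide_less_eq)
  define y' where "y' = (1 - t) *\<^sub>R y + t *\<^sub>R b"
  have y'W: "y' \<in> W" using cW yW bW t unfolding y'_def convex_alt by auto
  have hy': "h y' = 0"
  proof -
    have "h y' = (1 - t) * H + t * h b" by (simp add: y'_def hcomb H_def)
    also have "\<dots> = H - t * (H - h b)" by (simp add: algebra_simps)
    also have "\<dots> = 0" using Hpos hb by (simp add: t_def)
    finally show ?thesis .
  qed
  define P where "P s = (1 - s) *\<^sub>R y' + s *\<^sub>R y" for s :: real
  have PW: "P s \<in> W" if "0 \<le> s" "s \<le> 1" for s
    using cW y'W yW that unfolding P_def convex_alt by auto
  have hP: "h (P s) = s * H" for s by (simp add: P_def hcomb hy' H_def)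
  define x0 where "x0 = P (1/2)"
  have y2eq: "x0 - (1/2) *\<^sub>R (y - x0) = P (1/4)"
    by (rule euclidean_eqI) (simp add: x0_def P_def inner_simps algebra_simps)
  define n where "n = DIM('a)"
  define N where "N = nat \<lceil>48 ^ n / lam^2\<rceil> + 1"
  have Nbig: "real N > 48 ^ n / lam^2" unfolding N_def by linarith
  have N1: "N \<ge> 1" by (simp add: N_def)
  define \<gamma> where "\<gamma> = 3 * H / (8 * real N)"
  have gam: "\<gamma> > 0" "\<gamma> \<le> H" using Hpos N1 by (auto simp: \<gamma>_def field_simps)
  define F where "F = (sphere z0 \<rho> \<inter> {z. e \<bullet> z \<ge> \<alpha>}) \<union> (cball z0 \<rho> \<inter> {z. e \<bullet> z \<ge> H + \<gamma> + \<alpha>})"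
  have FO: "F \<subseteq> cball z0 \<rho>" by (auto simp: F_def)
  have Fcomp: "compact F"
  proof -
    have "closed F" unfolding F_def
      by (intro closed_Un closed_Int closed_halfspace_ge) auto
    moreover have "bounded F" using FO by (rule bounded_subset[rotated]) auto
    ultimately show ?thesis by (simp add: compact_eq_bounded_closed)
  qed
  have Fpos: "\<forall>z\<in>F. g z > 0"
  proof
    fix z assume z: "z \<in> F"
    have zO: "z \<in> \<Omega>" using z FO rho by blast
    show "g z > 0"
    proof (rule ccontr)
      assume "\<not> g z > 0"
      then have zW: "z \<in> W" using g0[OF zO] zO gW by auto
      show False
      proof (cases "z \<in> sphere z0 \<rho>")
        case True
        then have "h z \<ge> 0" using z Hpos gam by (auto simp: F_def h_def)
        then have "dist z0 z < \<rho>/2" using cap zW by blast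
        then show False using True rho by simp
      next
        case False
        then have "h z \<ge> H + \<gamma>" using z by (auto simp: F_def h_def)
        then show False using hmax[OF zW] gam Hpos by linarith
      qed
    qed
  qed
  obtain \<epsilon> where eps: "\<epsilon> > 0" "\<forall>z\<in>F. \<epsilon> * h z < g z"
    using compact_eps[OF Fcomp continuous_on_subset[OF contg] hcont Fpos] FO rho by blast
  define w where "w z = u z + ((- u x + p \<bullet> x) + \<epsilon> * \<alpha>) + (- p - \<epsilon> *\<^sub>R e) \<bullet> z" for z
  have weq: "w z = g z - \<epsilon> * h z" for z
    by (simp add: w_def g_def h_def inner_simps algebra_simps)
  have cw: "convex_on \<Omega> w" unfolding w_def[abs_def] by (rule convex_on_shift[OF cu])
  have contw: "continuous_on \<Omega> w" using convex_on_continuous[OF oO cw] .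
  have MAw: "\<And>E. E \<in> sets borel \<Longrightarrow> E \<subseteq> \<Omega> \<Longrightarrow>
           ennreal lam * emeasure lebesgue E \<le> MA_measure \<Omega> w E
         \<and> MA_measure \<Omega> w E \<le> ennreal (1 / lam) * emeasure lebesgue E"
    unfolding w_def[abs_def] MA_shift by (rule MAu)
  define Z where "Z = {z\<in>\<Omega>. w z < 0}"
  have oZ: "open Z"
  proof -
    have "Z = \<Omega> \<inter> w -` {..<0}" by (auto simp: Z_def)
    then show ?thesis using continuous_open_preimage[OF contw oO, of "{..<0}"] by simp
  qed
  have cZ: "convex Z" unfolding convex_alt
  proof (intro ballI allI impI)
    fix a c and t :: real assume a: "a \<in> Z" and c: "c \<in> Z" and t: "0 \<le> t \<and> t \<le> 1"
    have inO: "(1 - t) *\<^sub>R a + t *\<^sub>R c \<in> \<Omega>" using a c t cO by (auto simp: convex_alt Z_def)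
    have "w ((1 - t) *\<^sub>R a + t *\<^sub>R c) \<le> (1 - t) * w a + t * w c"
      using convex_onD[OF cw, of t a c] a c t by (auto simp: Z_def)
    also have "\<dots> < 0"
    proof (cases "t = 0")
      case True then show ?thesis using a by (simp add: Z_def)
    next
      case False
      then have "t * w c < 0" using t c by (simp add: Z_def mult_pos_neg)
      moreover have "(1 - t) * w a \<le> 0" using t a by (simp add: Z_def mult_nonneg_nonpos)
      ultimately show ?thesis by linarith
    qed
    finally show "(1 - t) *\<^sub>R a + t *\<^sub>R c \<in> Z" using inO by (simp add: Z_def)
  qed
  have WZ: "z \<in> Z" if "z \<in> W" "h z > 0" for z
    using that eps(1) by (auto simp: Z_def gW weq)
  have z0Z: "z0 \<in> Z" using WZ z0W hz0 by blast
  have ZB: "Z \<subseteq> ball z0 \<rho>"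
  proof
    fix z assume z: "z \<in> Z"
    show "z \<in> ball z0 \<rho>"
    proof (rule ccontr)
      assume "z \<notin> ball z0 \<rho>"
      then have dz: "dist z0 z \<ge> \<rho>" by simp
      define t where "t = \<rho> / dist z0 z"
      have dpos: "dist z0 z > 0" using dz rho by linarith
      have t: "0 < t" "t \<le> 1" using dz rho dpos by (auto simp: t_def divide_le_eq)
      define z' where "z' = (1 - t) *\<^sub>R z0 + t *\<^sub>R z"
      have z'Z: "z' \<in> Z" using cZ z0Z z t unfolding z'_def convex_alt by auto
      have "dist z0 z' = \<rho>"
      proof -
        have "z0 - z' = t *\<^sub>R (z0 - z)" by (simp add: z'_def algebra_simps)
        then have "dist z0 z' = t * dist z0 z" using t by (simp add: dist_norm)
        then show ?thesis using dpos by (simp add: t_def)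
      qed
      moreover have z'O: "z' \<in> \<Omega>" using z'Z by (simp add: Z_def)
      moreover have "w z' < 0" using z'Z by (simp add: Z_def)
      then have "\<epsilon> * h z' > 0" using g0[OF z'O] by (simp add: weq)
      then have "h z' > 0" using eps(1) by (simp add: zero_less_mult_iff)
      ultimately have "z' \<in> F" by (auto simp: F_def h_def)
      then have "\<epsilon> * h z' < g z'" using eps by blast
      then show False using \<open>w z' < 0\<close> by (simp add: weq)
    qed
  qed
  have Zh: "h z < H + \<gamma>" if "z \<in> Z" for z
  proof (rule ccontr)
    assume "\<not> h z < H + \<gamma>"
    then have "z \<in> F" using ZB that by (auto simp: F_def h_def)
    then have "\<epsilon> * h z < g z" using eps by blast
    then show False using that by (simp add: Z_def weq)
  qed
  have clZ: "closure Z \<subseteq> \<Omega>"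
  proof -
    have "closure Z \<subseteq> cball z0 \<rho>" using ZB by (intro closure_minimal) auto
    then show ?thesis using rho by blast
  qed
  have bZ: "bounded Z" using ZB by (rule bounded_subset[rotated]) auto
  have out: "\<forall>z\<in>\<Omega> - Z. w z \<ge> 0" by (auto simp: Z_def)
  have neg: "\<forall>z\<in>Z. w z < 0" by (auto simp: Z_def)
  have yZ: "y \<in> Z" using WZ[OF yW] Hpos by (simp add: H_def)
  have x0Z: "x0 \<in> Z" using WZ[OF PW] hP Hpos by (simp add: x0_def)
  have y2Z: "x0 - (1/2) *\<^sub>R (y - x0) \<in> Z" unfolding y2eq using WZ[OF PW] hP Hpos by simp
  define v where "v = (2 / H) *\<^sub>R e"
  have hdiff: "e \<bullet> (a - c) = h a - h c" for a c by (simp add: h_def inner_simps)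
  have v1: "v \<bullet> (y - x0) = 1"
    using Hpos by (simp add: v_def hdiff hP x0_def H_def[symmetric])
  define \<tau> where "\<tau> = 2 * \<gamma> / H"
  have vtau: "\<forall>z\<in>Z. v \<bullet> (z - y) \<le> \<tau>"
  proof
    fix z assume z: "z \<in> Z"
    have "v \<bullet> (z - y) = (2 / H) * (h z - H)" by (simp add: v_def hdiff H_def)
    also have "\<dots> \<le> (2 / H) * \<gamma>" using Zh[OF z] Hpos by (intro mult_left_mono) auto
    finally show "v \<bullet> (z - y) \<le> \<tau>" by (simp add: \<tau>_def)
  qed
  define Mm where "Mm = \<epsilon> * (H + \<gamma>)"
  have Mm: "\<forall>z\<in>Z. w z \<ge> - Mm"
  proof
    fix z assume z: "z \<in> Z"
    have "g z \<ge> 0" using g0 z by (simp add: Z_def)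
    moreover have "\<epsilon> * h z \<le> \<epsilon> * (H + \<gamma>)" using Zh[OF z] eps(1) by simp
    ultimately show "w z \<ge> - Mm" by (simp add: weq Mm_def)
  qed
  have Ncond: "4 * real (N - 1) * \<tau> < 3"
  proof -
    have "4 * real (N - 1) * \<tau> = 3 * (real N - 1) / real N"
      using N1 Hpos by (simp add: \<tau>_def \<gamma>_def of_nat_diff field_simps)
    also have "\<dots> < 3" using N1 by (simp add: divide_less_eq)
    finally show ?thesis .
  qed
  have key: "real N * ((- w y)/6) ^ n \<le> (4 * Mm) ^ n / lam^2"
    unfolding n_def
    by (rule core[OF oO cw clZ oZ bZ cZ neg out yZ x0Z y2Z v1 vtau Mm lam MAw Ncond])
  have wy: "- w y = \<epsilon> * H" using yW by (simp add: weq gW H_def)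
  have "4 * Mm \<le> 8 * (\<epsilon> * H)" using gam eps(1) by (simp add: Mm_def algebra_simps)
  then have "(4 * Mm) ^ n \<le> (8 * (\<epsilon> * H)) ^ n" using eps(1) gam Hpos
    by (intro power_mono) (auto simp: Mm_def)
  also have "\<dots> = 48 ^ n * ((\<epsilon> * H)/6) ^ n"
  proof -
    have "(48::real) ^ n = 8 ^ n * 6 ^ n" by (simp add: power_mult_distrib[symmetric])
    then show ?thesis by (simp add: power_divide power_mult_distrib)
  qed
  finally have "real N * ((\<epsilon> * H)/6) ^ n \<le> 48 ^ n * ((\<epsilon> * H)/6) ^ n / lam^2"
    using key wy lam by (smt (verit) divide_right_mono zero_le_power2)
  moreover have "((\<epsilon> * H)/6) ^ n > 0" using eps(1) Hpos by simp
  ultimately have "real N \<le> 48 ^ n / lam^2"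
    by (metis (no_types, lifting) mult.commute mult_le_cancel_left_pos times_divide_eq_right)
  then show False using Nbig by linarith
qed

end
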